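(* Let $n,r$ be positive integers, let $C\in\mathbb{R}^{n\times n}$ be symmetric, and let $\rho\ge\max\{10\|C\|_{\infty},\,2\|C\|\}$. Let $(\tilde\sigma^k,\sigma^k,y^k)_{k\ge 0}$ be generated by the ADMM-BM algorithm described in the context, and suppose Assumption A holds (i.e. $\gamma_i^k\neq 0$ for every $i\in[n]$ and every iteration $k$). Then the sequence $L_\rho(\tilde\sigma^k,\sigma^k,y^k)$, $k\ge 1$, converges, and $L_\rho(\tilde\sigma^k,\sigma^k,y^k)-\langle C\tilde\sigma^k,\tilde\sigma^k\rangle\to 0$ as $k\to\infty$. Moreover, the sequence $(\tilde\sigma^k)$ has at least one convergent subsequence, and the limit of every convergent subsequence of $(\tilde\sigma^k)$ belongs to the set $\Omega$ of first-order stationary points of the problem $\min\{\langle C,\sigma\sigma^\top\rangle:\sigma\in\mathcal{M}\}$.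
   Context: For $A,B$ of equal size, $\langle A,B\rangle=\mathrm{Tr}(A^\top B)$ and $\|A\|_F=\sqrt{\langle A,A\rangle}$. $\|C\|$ is the spectral (operator 2-) norm and $\|C\|_\infty=\max_i\sum_j|C_{ij}|$. For $\sigma\in\mathbb{R}^{n\times r}$, $\sigma_i\in\mathbb{R}^r$ denotes the (transpose of the) $i$-th row, and $(C\sigma)_{i,\cdot}$ the $i$-th row of $C\sigma$. Let $\mathcal{M}=\{\sigma\in\mathbb{R}^{n\times r}:\|\sigma_i\|=1\ \forall i\in[n]\}$. ADMM-BM algorithm with parameter $\rho>0$: choose $\tilde\sigma^0\in\mathcal{M}$, set $\sigma^0=\tilde\sigma^0$, $y^0=C\tilde\sigma^0$. For $k=0,1,2,\dots$: set $\gamma^k=\sigma^k-\frac1\rho(y^k+C\sigma^k)$ with rows $\gamma^k_i$; set $\tilde\sigma^{k+1}_i=\gamma_i^k/\|\gamma_i^k\|$ for each $i\in[n]$; set $\sigma^{k+1}=\tilde\sigma^{k+1}+\frac1\rho(y^k-C\tilde\sigma^{k+1})$; set $y^{k+1}=y^k+\rho(\tilde\sigma^{k+1}-\sigma^{k+1})$. Assumption A: $\|\gamma_i^k\|\neq0$ for all $i\in[n]$ and all $k$. Augmented Lagrangian: $L_\rho(\tilde\sigma,\sigma,y)=\langle C,\tilde\sigma\sigma^\top\rangle+\langle y,\tilde\sigma-\sigma\rangle+\frac\rho2\|\tilde\sigma-\sigma\|_F^2+\sum_{i=1}^n\mathcal{I}_{\{\|u\|=1\}}(\tilde\sigma_i)$,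 where $\mathcal{I}_S$ is the indicator function of $S$ (0 on $S$, $+\infty$ outside). A first-order stationary point is a $\tilde\sigma^*\in\mathcal{M}$ such that $-(C\tilde\sigma^* )_{i,\cdot}^\top\in\partial\mathcal{I}_{\{\|u\|=1\}}(\tilde\sigma^*_i)$ for all $i\in[n]$, where $\partial$ is the limiting subdifferential (for the unit sphere at a point $u$ this is $\{tu:t\in\mathbb{R}\}$). *)

theory Defs
  imports "HOL-Analysis.Analysis" "HOL-Library.Extended_Real"
begin

text \<open>Matrices in R^(n x r) are rendered as real^'r^'n: row i of sigma is sigma $ i :: real^'r.
  The Frobenius inner product <A,B> = Tr(A^T B) is the inner product on real^'r^'n.\<close>

definition frob :: "real^'b^'a \<Rightarrow> real^'b^'a \<Rightarrow> real" where
  "frob A B = (\<Sum>i\<in>UNIV. \<Sum>j\<in>UNIV. A $ i $ j * B $ i $ j)"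

definition spec_norm :: "real^'n^'n \<Rightarrow> real" where
  "spec_norm C = onorm (\<lambda>x. C *v x)"

definition inf_norm :: "real^'n^'n \<Rightarrow> real" where
  "inf_norm C = (MAX i. \<Sum>j\<in>UNIV. \<bar>C $ i $ j\<bar>)"

definition Mset :: "(real^'r^'n) set" where
  "Mset = {\<sigma>. \<forall>i. norm (\<sigma> $ i) = 1}"

definition indicator_ereal :: "'a set \<Rightarrow> 'a \<Rightarrow> ereal" where
  "indicator_ereal S x = (if x \<in> S then 0 else \<infinity>)"

definition sphere1 :: "(real^'r) set" where
  "sphere1 = {u. norm u = 1}"

definition frechet_subdiff :: "(real^'r \<Rightarrow> ereal) \<Rightarrow> real^'r \<Rightarrow> (real^'r) set" where
  "frechet_subdiff f x = {v. \<bar>f x\<bar> \<noteq> \<infinity> \<and>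
     Liminf (at x) (\<lambda>z. (f z - f x - ereal (v \<bullet> (z - x))) / ereal (norm (z - x))) \<ge> 0}"

definition limiting_subdiff :: "(real^'r \<Rightarrow> ereal) \<Rightarrow> real^'r \<Rightarrow> (real^'r) set" where
  "limiting_subdiff f x = {v. \<bar>f x\<bar> \<noteq> \<infinity> \<and> (\<exists>xs vs. xs \<longlonglongrightarrow> x \<and> (\<lambda>k. f (xs k)) \<longlonglongrightarrow> f x
      \<and> (\<forall>k. vs k \<in> frechet_subdiff f (xs k)) \<and> vs \<longlonglongrightarrow> v)}"

definition Lrho :: "real \<Rightarrow> real^'n^'n \<Rightarrow> real^'r^'n \<Rightarrow> real^'r^'n \<Rightarrow> real^'r^'n \<Rightarrow> ereal" where
  "Lrho \<rho> C ts s y = ereal (frob C (ts ** transpose s) + frob y (ts - s) + \<rho> / 2 * (norm (ts - s))\<^sup>2)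
     + (\<Sum>i\<in>UNIV. indicator_ereal sphere1 (ts $ i))"

definition Omega :: "real^'n^'n \<Rightarrow> (real^'r^'n) set" where
  "Omega C = {\<sigma>. \<sigma> \<in> Mset \<and>
     (\<forall>i. - ((C ** \<sigma>) $ i) \<in> limiting_subdiff (indicator_ereal sphere1) (\<sigma> $ i))}"

definition gam :: "real \<Rightarrow> real^'n^'n \<Rightarrow> real^'r^'n \<Rightarrow> real^'r^'n \<Rightarrow> real^'r^'n" where
  "gam \<rho> C s y = s - (1/\<rho>) *\<^sub>R (y + C ** s)"

definition is_admm_bm :: "real \<Rightarrow> real^'n^'n \<Rightarrow> (nat \<Rightarrow> real^'r^'n) \<Rightarrow> (nat \<Rightarrow> real^'r^'n)
    \<Rightarrow> (nat \<Rightarrow> real^'r^'n) \<Rightarrow> bool" where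
  "is_admm_bm \<rho> C ts s y \<longleftrightarrow>
     ts 0 \<in> Mset \<and> s 0 = ts 0 \<and> y 0 = C ** ts 0 \<and>
     (\<forall>k. (\<forall>i. ts (Suc k) $ i = (1 / norm (gam \<rho> C (s k) (y k) $ i)) *\<^sub>R (gam \<rho> C (s k) (y k) $ i))
        \<and> s (Suc k) = ts (Suc k) + (1/\<rho>) *\<^sub>R (y k - C ** ts (Suc k))
        \<and> y (Suc k) = y k + \<rho> *\<^sub>R (ts (Suc k) - s (Suc k)))"

end

theory Submission
  imports Defs
begin

lemma frob_mult: "frob C (X ** transpose S) = inner X (C ** S)"
proof -
  have "frob C (X ** transpose S) = (\<Sum>i\<in>UNIV. \<Sum>j\<in>UNIV. \<Sum>k\<in>UNIV. C$i$j * X$i$k * S$j$k)"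
    by (simp add: frob_def matrix_matrix_mult_def transpose_def sum_distrib_left mult.assoc)
  also have "\<dots> = (\<Sum>i\<in>UNIV. \<Sum>k\<in>UNIV. \<Sum>j\<in>UNIV. C$i$j * X$i$k * S$j$k)"
    by (rule sum.cong[OF refl], rule sum.swap)
  also have "\<dots> = inner X (C ** S)"
    by (simp add: inner_vec_def matrix_matrix_mult_def sum_distrib_left mult_ac)
  finally show ?thesis .
qed


lemma mm_diff: "(C::real^'n^'m) ** (A - B) = C ** A - C ** B"
  unfolding matrix_matrix_mult_def vec_eq_iff
  by (simp add: sum_subtractf[symmetric] right_diff_distrib)
lemma mm_scale: "(C::real^'n^'m) ** (c *\<^sub>R A) = c *\<^sub>R (C ** A)"
  unfolding matrix_matrix_mult_def vec_eq_iff
  by (simp add: sum_distrib_left mult_ac)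

lemma mm_row: "((C::real^'n^'m) ** Z) $ i = (\<Sum>j\<in>UNIV. C$i$j *\<^sub>R Z$j)"
  by (simp add: matrix_matrix_mult_def vec_eq_iff)
lemma norm_sq_rows: "(norm (x::real^'r^'n))\<^sup>2 = (\<Sum>i\<in>UNIV. (norm (x$i))\<^sup>2)"
  by (simp add: power2_norm_eq_inner inner_vec_def)
lemma row_sum_le: "(\<Sum>j\<in>UNIV. \<bar>C$i$j\<bar>) \<le> inf_norm C"
  unfolding inf_norm_def by (rule Max_ge) auto
lemma inf_norm_nonneg: "0 \<le> inf_norm C"
  by (rule order_trans[OF _ row_sum_le]) (simp add: sum_nonneg)
lemma wcs: assumes "\<And>j. 0 \<le> (a j::real)"
  shows "(\<Sum>j\<in>A. a j * b j)\<^sup>2 \<le> (\<Sum>j\<in>A. a j) * (\<Sum>j\<in>A. a j * (b j)\<^sup>2)"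
proof -
  have "(\<Sum>j\<in>A. sqrt (a j) * (sqrt (a j) * b j))\<^sup>2 \<le> (\<Sum>j\<in>A. (sqrt (a j))\<^sup>2) * (\<Sum>j\<in>A. (sqrt (a j) * b j)\<^sup>2)"
    by (rule Cauchy_Schwarz_ineq_sum)
  then show ?thesis using assms by (simp add: power_mult_distrib mult.assoc[symmetric])
qed

lemma selfadj: assumes "transpose C = C" shows "inner ((C::real^'n^'n) ** X) Y = inner X (C ** Y)"
proof -
  have c: "C$i$j = C$j$i" for i j using assms by (metis transpose_def vec_lambda_beta)
  have "inner (C ** X) Y = (\<Sum>i\<in>UNIV. \<Sum>k\<in>UNIV. \<Sum>j\<in>UNIV. C$i$j * X$j$k * Y$i$k)"
    by (simp add: inner_vec_def matrix_matrix_mult_def sum_distrib_right)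
  also have "\<dots> = (\<Sum>i\<in>UNIV. \<Sum>j\<in>UNIV. \<Sum>k\<in>UNIV. C$i$j * X$j$k * Y$i$k)"
    by (rule sum.cong[OF refl], rule sum.swap)
  also have "\<dots> = (\<Sum>j\<in>UNIV. \<Sum>i\<in>UNIV. \<Sum>k\<in>UNIV. C$i$j * X$j$k * Y$i$k)"
    by (rule sum.swap)
  also have "\<dots> = (\<Sum>j\<in>UNIV. \<Sum>k\<in>UNIV. \<Sum>i\<in>UNIV. C$i$j * X$j$k * Y$i$k)"
    by (rule sum.cong[OF refl], rule sum.swap)
  also have "\<dots> = inner X (C ** Y)"
    by (simp add: inner_vec_def matrix_matrix_mult_def sum_distrib_left mult_ac c)
  finally show ?thesis .
qed

lemma schur:
  assumes "transpose C = C"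
  shows "norm ((C::real^'n^'n) ** Z) \<le> inf_norm C * norm (Z::real^'r^'n)"
proof -
  let ?K = "inf_norm C"
  have c: "C$i$j = C$j$i" for i j using assms by (metis transpose_def vec_lambda_beta)
  have K: "0 \<le> ?K" by (rule inf_norm_nonneg)
  have "(norm (C ** Z))\<^sup>2 = (\<Sum>i\<in>UNIV. (norm ((C ** Z)$i))\<^sup>2)" by (rule norm_sq_rows)
  also have "\<dots> \<le> (\<Sum>i\<in>UNIV. (\<Sum>j\<in>UNIV. \<bar>C$i$j\<bar> * norm (Z$j))\<^sup>2)"
  proof (rule sum_mono)
    fix i
    have "norm ((C ** Z)$i) \<le> (\<Sum>j\<in>UNIV. norm (C$i$j *\<^sub>R Z$j))"
      unfolding mm_row by (rule norm_sum)
    then show "(norm ((C ** Z)$i))\<^sup>2 \<le> (\<Sum>j\<in>UNIV. \<bar>C$i$j\<bar> * norm (Z$j))\<^sup>2"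
      by (simp add: power_mono)
  qed
  also have "\<dots> \<le> (\<Sum>i\<in>UNIV. (\<Sum>j\<in>UNIV. \<bar>C$i$j\<bar>) * (\<Sum>j\<in>UNIV. \<bar>C$i$j\<bar> * (norm (Z$j))\<^sup>2))"
    by (rule sum_mono) (rule wcs, simp)
  also have "\<dots> \<le> (\<Sum>i\<in>UNIV. ?K * (\<Sum>j\<in>UNIV. \<bar>C$i$j\<bar> * (norm (Z$j))\<^sup>2))"
    by (rule sum_mono) (rule mult_right_mono[OF row_sum_le], simp add: sum_nonneg)
  also have "\<dots> = ?K * (\<Sum>i\<in>UNIV. \<Sum>j\<in>UNIV. \<bar>C$i$j\<bar> * (norm (Z$j))\<^sup>2)"
    by (simp add: sum_distrib_left)
  also have "\<dots> = ?K * (\<Sum>j\<in>UNIV. \<Sum>i\<in>UNIV. \<bar>C$i$j\<bar> * (norm (Z$j))\<^sup>2)"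
    by (subst sum.swap) (rule refl)
  also have "\<dots> = ?K * (\<Sum>j\<in>UNIV. (\<Sum>i\<in>UNIV. \<bar>C$j$i\<bar>) * (norm (Z$j))\<^sup>2)"
    by (simp add: sum_distrib_right c)
  also have "\<dots> \<le> ?K * (\<Sum>j\<in>UNIV. ?K * (norm (Z$j))\<^sup>2)"
    by (rule mult_left_mono[OF sum_mono K]) (rule mult_right_mono[OF row_sum_le], simp)
  also have "\<dots> = ?K * (?K * (norm Z)\<^sup>2)"
    by (simp add: norm_sq_rows sum_distrib_left)
  also have "\<dots> = (?K * norm Z)\<^sup>2"
    by (simp add: power2_eq_square)
  finally show ?thesis using K by (simp add: power2_le_iff_abs_le)
qed

lemma frob_inner: "frob A B = inner A B"
  by (simp add: frob_def inner_vec_def)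

lemma mm_zero: "(C::real^'n^'m) ** (0::real^'r^'n) = 0"
  by (simp add: matrix_matrix_mult_def vec_eq_iff)

lemma linear_mm: "linear (\<lambda>Z::real^'r^'n. (C::real^'n^'m) ** Z)"
  by (rule linearI) (simp_all add: matrix_add_ldistrib mm_scale)

lemma row_bound:
  assumes "\<And>j. norm (Z$j) \<le> m"
  shows "norm (((C::real^'n^'n) ** (Z::real^'r^'n))$i) \<le> inf_norm C * m"
proof -
  have m: "0 \<le> m" using assms[of undefined] norm_ge_zero order_trans by blast
  have "norm ((C ** Z)$i) \<le> (\<Sum>j\<in>UNIV. norm (C$i$j *\<^sub>R Z$j))"
    unfolding mm_row by (rule norm_sum)
  also have "\<dots> \<le> (\<Sum>j\<in>UNIV. \<bar>C$i$j\<bar> * m)"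
    by (rule sum_mono) (simp add: assms mult_left_mono)
  also have "\<dots> = (\<Sum>j\<in>UNIV. \<bar>C$i$j\<bar>) * m" by (simp add: sum_distrib_right)
  also have "\<dots> \<le> inf_norm C * m" by (rule mult_right_mono[OF row_sum_le m])
  finally show ?thesis .
qed

lemma step_id:
  fixes f :: "'a::real_inner \<Rightarrow> 'a"
  assumes lin: "linear f" and sa: "\<And>u v. inner (f u) v = inner u (f v)" and rho: "\<rho> > 0"
   and nx: "norm x' = norm x"
   and y: "y = f x"
   and s': "s' = x' + (1/\<rho>) *\<^sub>R (y - f x')"
   and y': "y' = f x'"
  shows "(inner x' (f s') + inner y' (x' - s') + \<rho>/2 * (norm (x' - s'))\<^sup>2)
       - (inner x (f s) + inner y (x - s) + \<rho>/2 * (norm (x - s))\<^sup>2)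
       = - \<rho> * inner (x' - x) (s - (1/\<rho>) *\<^sub>R (y + f s)) - \<rho>/2 * (norm (s' - s))\<^sup>2
         + (norm (f (x' - x)))\<^sup>2 / \<rho>"
proof -
  have nx2: "inner x' x' = inner x x" using nx by (simp add: power2_norm_eq_inner[symmetric])
  have st1: "(inner x' (f s) + inner y (x' - s) + \<rho>/2 * (norm (x' - s))\<^sup>2)
       - (inner x (f s) + inner y (x - s) + \<rho>/2 * (norm (x - s))\<^sup>2)
       = - \<rho> * inner (x' - x) (s - (1/\<rho>) *\<^sub>R (y + f s))"
    using rho nx2 by (simp add: power2_norm_eq_inner inner_simps algebra_simps inner_commute)
  define d where "d = s' - s"
  define e where "e = x' - s'"
  have e: "e = - (1/\<rho>) *\<^sub>R (y - f x')" using s' by (simp add: e_def)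
  have xs: "x' - s = e + d" by (simp add: e_def d_def)
  have fd: "inner x' (f s') - inner x' (f s) = inner (f x') d"
    by (simp add: sa d_def linear_diff[OF lin] inner_diff_right)
  have nn: "(norm (e + d))\<^sup>2 = (norm e)\<^sup>2 + 2 * inner e d + (norm d)\<^sup>2"
    by (simp add: power2_norm_eq_inner inner_simps inner_commute)
  have ed: "\<rho> * inner e d = - inner (y - f x') d" using rho by (simp add: e)
  have st2: "(inner x' (f s') + inner y (x' - s') + \<rho>/2 * (norm (x' - s'))\<^sup>2)
       - (inner x' (f s) + inner y (x' - s) + \<rho>/2 * (norm (x' - s))\<^sup>2)
       = - \<rho>/2 * (norm d)\<^sup>2"
  proof -
    have yd: "inner y (x' - s') - inner y (x' - s) = - inner y d"
      by (simp add: d_def inner_simps)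
    have "(inner x' (f s') + inner y (x' - s') + \<rho>/2 * (norm (x' - s'))\<^sup>2)
       - (inner x' (f s) + inner y (x' - s) + \<rho>/2 * (norm (x' - s))\<^sup>2)
       = (inner x' (f s') - inner x' (f s)) + (inner y (x' - s') - inner y (x' - s))
         + \<rho>/2 * ((norm e)\<^sup>2 - (norm (e + d))\<^sup>2)"
      unfolding e_def[symmetric] xs by (simp add: algebra_simps)
    also have "\<dots> = inner (f x') d - inner y d - \<rho> * inner e d - \<rho>/2 * (norm d)\<^sup>2"
      unfolding fd yd nn by (simp add: algebra_simps)
    also have "\<dots> = - \<rho>/2 * (norm d)\<^sup>2"
      using ed by (simp add: inner_diff_left)
    finally show ?thesis .
  qed
  have st3: "inner y' (x' - s') - inner y (x' - s') = (norm (f (x' - x)))\<^sup>2 / \<rho>"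
  proof -
    have h1: "x' - s' = (1/\<rho>) *\<^sub>R (f (x' - x))" using s' y by (simp add: linear_diff[OF lin] scaleR_diff_right)
    have h2: "y' - y = f (x' - x)" unfolding y y' by (rule linear_diff[OF lin, symmetric])
    have "inner (y' - y) (x' - s') = (norm (f (x' - x)))\<^sup>2 / \<rho>"
      unfolding h1 h2 by (simp add: power2_norm_eq_inner)
    then show ?thesis by (simp add: inner_diff_left)
  qed
  show ?thesis using st1 st2 st3 d_def by simp
qed

lemma frechet_sphere:
  fixes u :: "real^'r"
  assumes u: "norm u = 1"
  shows "t *\<^sub>R u \<in> frechet_subdiff (indicator_ereal sphere1) u"
proof -
  let ?f = "indicator_ereal sphere1 :: real^'r \<Rightarrow> ereal"
  have us: "u \<in> sphere1" using u by (simp add: sphere1_def)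
  have fu: "?f u = 0" using us by (simp add: indicator_ereal_def)
  have "\<forall>\<^sub>F z in at u. y < (?f z - ?f u - ereal ((t *\<^sub>R u) \<bullet> (z - u))) / ereal (norm (z - u))"
    if y: "y < 0" for y :: ereal
  proof (cases y)
    case MInf
    have "\<forall>\<^sub>F z in at u. z \<noteq> u" by (simp add: eventually_at_filter)
    then show ?thesis
    proof (rule eventually_mono)
      fix z :: "real^'r" assume "z \<noteq> u"
      then have r: "norm (z - u) > 0" by simp
      show "y < (?f z - ?f u - ereal ((t *\<^sub>R u) \<bullet> (z - u))) / ereal (norm (z - u))"
        using r MInf us by (auto simp: indicator_ereal_def fu ereal_divide ereal_divide_ereal)
    qed
  next
    case PInf then show ?thesis using y by simp
  next
    case (real y')
    have y': "y' < 0" using y real by simp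
    define d where "d = - y' / (\<bar>t\<bar> + 1)"
    have d: "d > 0" using y' by (auto simp: d_def intro!: divide_neg_pos)
    show ?thesis unfolding eventually_at
    proof (intro exI[of _ d] conjI ballI impI)
      show "d > 0" by (rule d)
      fix z :: "real^'r" assume "z \<in> UNIV" and z: "z \<noteq> u \<and> dist z u < d"
      define r where "r = norm (z - u)"
      have r: "r > 0" using z by (simp add: r_def)
      have rd: "r < d" using z by (simp add: r_def dist_norm)
      show "y < (?f z - ?f u - ereal ((t *\<^sub>R u) \<bullet> (z - u))) / ereal (norm (z - u))"
      proof (cases "z \<in> sphere1")
        case False then show ?thesis using r real
          by (simp add: indicator_ereal_def fu ereal_divide_ereal r_def[symmetric])
      next
        case True
        then have nz: "norm z = 1" by (simp add: sphere1_def)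
        have uu: "u \<bullet> u = 1" "z \<bullet> z = 1" using u nz by (simp_all add: norm_eq_1)
        have rr: "r\<^sup>2 = 2 - 2 * (u \<bullet> z)" unfolding r_def
          using uu by (simp add: power2_norm_eq_inner inner_simps inner_commute)
        have a: "- ((t *\<^sub>R u) \<bullet> (z - u)) = t * r\<^sup>2 / 2"
        proof -
          have "- ((t *\<^sub>R u) \<bullet> (z - u)) = t * (1 - u \<bullet> z)"
            using uu by (simp add: inner_simps algebra_simps)
          also have "\<dots> = t * r\<^sup>2 / 2" using rr by simp
          finally show ?thesis .
        qed
        have q: "(?f z - ?f u - ereal ((t *\<^sub>R u) \<bullet> (z - u))) / ereal (norm (z - u)) = ereal (t * r / 2)"
        proof -
          have fz: "?f z = 0" using True by (simp add: indicator_ereal_def)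
          have a': "- ((t *\<^sub>R u) \<bullet> (z - u)) / r = t * r / 2"
            unfolding a using r by (simp add: power2_eq_square)
          have "(?f z - ?f u - ereal ((t *\<^sub>R u) \<bullet> (z - u))) / ereal (norm (z - u))
              = ereal (- ((t *\<^sub>R u) \<bullet> (z - u))) / ereal r"
            unfolding fz fu r_def by simp
          also have "\<dots> = ereal (- ((t *\<^sub>R u) \<bullet> (z - u)) / r)"
            using r by (simp only: ereal_divide) simp
          finally show ?thesis unfolding a' .
        qed
        have "\<bar>t\<bar> * r \<le> \<bar>t\<bar> * d" using rd by (simp add: mult_left_mono)
        also have "\<dots> < (\<bar>t\<bar> + 1) * d" using d by (simp add: distrib_right)
        also have "\<dots> = - y'" using d_def by simp
        finally have h1: "\<bar>t\<bar> * r < - y'" .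
        have h2: "-(\<bar>t\<bar> * r) \<le> t * r" using r by (cases "t \<ge> 0") (simp_all add: abs_if)
        have "y' < t * r / 2" using h1 h2 y' by linarith
        then show ?thesis using q real by simp
      qed
    qed
  qed
  then have "0 \<le> Liminf (at u) (\<lambda>z. (?f z - ?f u - ereal ((t *\<^sub>R u) \<bullet> (z - u))) / ereal (norm (z - u)))"
    by (simp add: le_Liminf_iff)
  then show ?thesis unfolding frechet_subdiff_def using fu by simp
qed

lemma limiting_sphere:
  fixes u :: "real^'r"
  assumes u: "norm u = 1"
  shows "t *\<^sub>R u \<in> limiting_subdiff (indicator_ereal sphere1) u"
proof -
  let ?f = "indicator_ereal sphere1 :: real^'r \<Rightarrow> ereal"
  have fu: "?f u = 0" using u by (simp add: indicator_ereal_def sphere1_def)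
  show ?thesis unfolding limiting_subdiff_def mem_Collect_eq
    apply (rule conjI)
     apply (simp add: fu)
    apply (rule exI[where x="\<lambda>k. u"])
    apply (rule exI[where x="\<lambda>k. t *\<^sub>R u"])
    using frechet_sphere[OF u, of t] by simp
qed

lemma row_lemma:
  fixes u g :: "real^'r"
  assumes u: "norm u = 1" and g: "norm g \<ge> 1/2" and u': "u' = (1 / norm g) *\<^sub>R g"
  shows "inner (u' - u) g \<ge> (norm (u' - u))\<^sup>2 / 4"
proof -
  have gp: "norm g > 0" using g by linarith
  have uu: "inner u u = 1" using u by (simp add: norm_eq_1)
  have u'g: "inner u' g = norm g" using gp unfolding u'
    by (simp add: power2_norm_eq_inner[symmetric] power2_eq_square)
  have u'u': "inner u' u' = 1" using gp unfolding u'
    by (simp add: power2_norm_eq_inner[symmetric] power2_eq_square)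
  have u'u: "inner u' u = inner u g / norm g" unfolding u' by (simp add: inner_commute)
  have n2: "(norm (u' - u))\<^sup>2 = 2 - 2 * (inner u g / norm g)"
    by (simp add: power2_norm_eq_inner inner_simps uu u'u' u'u inner_commute[of u u'])
  have i: "inner (u' - u) g = norm g - inner u g" by (simp add: inner_diff_left u'g)
  have "norm g * (norm (u' - u))\<^sup>2 = 2 * (norm g - inner u g)"
    unfolding n2 using gp by (simp add: algebra_simps)
  then have eq: "inner (u' - u) g = norm g * (norm (u' - u))\<^sup>2 / 2" using i by simp
  have "(norm (u' - u))\<^sup>2 / 4 = (1/2) * (norm (u' - u))\<^sup>2 / 2" by simp
  also have "\<dots> \<le> norm g * (norm (u' - u))\<^sup>2 / 2"
    using g by (intro divide_right_mono mult_right_mono) auto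
  finally show ?thesis using eq by simp
qed

lemma norm4: "norm (a::'a::real_normed_vector) - norm b - norm c - norm d \<le> norm (a + b - c - d)"
proof -
  let ?w = "a + b - c - d"
  have "norm a = norm (?w - b + c + d)" by simp
  also have "\<dots> \<le> norm (?w - b + c) + norm d" by (rule norm_triangle_ineq)
  also have "norm (?w - b + c) \<le> norm (?w - b) + norm c" by (rule norm_triangle_ineq)
  also have "norm (?w - b) \<le> norm ?w + norm b" by (rule norm_triangle_ineq4)
  finally have "norm a \<le> norm ?w + norm b + norm c + norm d" by simp
  then show ?thesis by simp
qed


theorem theorem1:
  fixes C :: "real^'n^'n" and \<rho> :: real
    and ts s y :: "nat \<Rightarrow> real^'r^'n"
  assumes symC: "transpose C = C"
    and rho: "\<rho> \<ge> max (10 * inf_norm C) (2 * spec_norm C)"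
    and rho_pos: "\<rho> > 0"
    and alg: "is_admm_bm \<rho> C ts s y"
    and assmA: "\<forall>k i. gam \<rho> C (s k) (y k) $ i \<noteq> 0"
  shows "(\<exists>l::real. (\<lambda>k. Lrho \<rho> C (ts (Suc k)) (s (Suc k)) (y (Suc k))) \<longlonglongrightarrow> ereal l)
    \<and> (\<lambda>k. Lrho \<rho> C (ts k) (s k) (y k) - ereal (frob (C ** ts k) (ts k))) \<longlonglongrightarrow> 0
    \<and> (\<exists>\<phi> l. strict_mono \<phi> \<and> (ts \<circ> \<phi>) \<longlonglongrightarrow> l)
    \<and> (\<forall>\<phi> l. strict_mono \<phi> \<and> (ts \<circ> \<phi>) \<longlonglongrightarrow> l \<longrightarrow> l \<in> Omega C)"
proof -
  define K where "K = inf_norm C"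
  have K0: "0 \<le> K" by (simp add: K_def inf_norm_nonneg)
  have Kr: "10 * K \<le> \<rho>" using rho by (simp add: K_def)
  have rne: "\<rho> \<noteq> 0" using rho_pos by simp
  have alg0: "ts 0 \<in> Mset" "s 0 = ts 0" "y 0 = C ** ts 0" using alg unfolding is_admm_bm_def by auto
  have tsS: "\<And>k i. ts (Suc k) $ i = (1 / norm (gam \<rho> C (s k) (y k) $ i)) *\<^sub>R (gam \<rho> C (s k) (y k) $ i)"
    using alg unfolding is_admm_bm_def by blast
  have sS: "\<And>k. s (Suc k) = ts (Suc k) + (1/\<rho>) *\<^sub>R (y k - C ** ts (Suc k))"
    using alg unfolding is_admm_bm_def by blast
  have yS: "\<And>k. y (Suc k) = y k + \<rho> *\<^sub>R (ts (Suc k) - s (Suc k))"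
    using alg unfolding is_admm_bm_def by blast
  have hy: "y k = C ** ts k" for k
  proof (cases k)
    case 0 then show ?thesis using alg0 by simp
  next
    case (Suc m)
    have "y (Suc m) = y m + \<rho> *\<^sub>R (- ((1/\<rho>) *\<^sub>R (y m - C ** ts (Suc m))))"
      using yS[of m] sS[of m] by simp
    also have "\<dots> = C ** ts (Suc m)" using rne by (simp add: scaleR_diff_right)
    finally show ?thesis using Suc by simp
  qed
  have hs: "s (Suc k) = ts (Suc k) + (1/\<rho>) *\<^sub>R (C ** ts k - C ** ts (Suc k))" for k
    using sS[of k] hy[of k] by simp
  have hM: "ts k \<in> Mset" for k
  proof (cases k)
    case 0 then show ?thesis using alg0 by simp
  next
    case (Suc m)
    show ?thesis unfolding Mset_def Suc
      using assmA by (simp add: tsS)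
  qed
  have unit: "norm (ts k $ i) = 1" for k i using hM[of k] by (simp add: Mset_def)
  have nX2: "(norm (ts k))\<^sup>2 = real CARD('n)" for k by (simp add: norm_sq_rows unit)
  define E where "E k = \<rho> *\<^sub>R (s k - ts k)" for k
  have sE: "s k = ts k + (1/\<rho>) *\<^sub>R E k" for k
    using rne by (simp add: E_def)
  have Erow: "norm (E k $ i) \<le> 2 * K" for k i
  proof (cases k)
    case 0 then show ?thesis using alg0 K0 by (simp add: E_def)
  next
    case (Suc m)
    have "E k = C ** (ts m - ts (Suc m))" using rne by (simp add: E_def Suc hs mm_diff)
    moreover have "norm ((ts m - ts (Suc m)) $ j) \<le> 2" for j
      using norm_triangle_ineq4[of "ts m $ j" "ts (Suc m) $ j"] by (simp add: unit)
    ultimately show ?thesis using row_bound[of "ts m - ts (Suc m)" 2 C i] by (simp add: K_def mult.commute)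
  qed
  have q0: "0 \<le> K / \<rho>" using K0 rho_pos by simp
  have q1: "K / \<rho> \<le> 1/10" using Kr rho_pos by (simp add: divide_simps)
  have srow: "norm (s k $ i) \<le> 1 + 2 * (K / \<rho>)" for k i
  proof -
    have "norm (s k $ i) \<le> norm (ts k $ i) + norm ((1/\<rho>) *\<^sub>R E k $ i)"
      unfolding sE vector_add_component vector_scaleR_component by (rule norm_triangle_ineq)
    also have "\<dots> \<le> 1 + (1/\<rho>) * (2 * K)"
      using Erow[of k i] rho_pos by (simp add: unit divide_right_mono)
    finally show ?thesis by simp
  qed
  have gam_row: "norm (gam \<rho> C (s k) (y k) $ i) \<ge> 1/2" for k i
  proof -
    have g: "gam \<rho> C (s k) (y k) $ i = ts k $ i + (1/\<rho>) *\<^sub>R E k $ i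
        - (1/\<rho>) *\<^sub>R (C ** ts k) $ i - (1/\<rho>) *\<^sub>R (C ** s k) $ i"
      unfolding gam_def hy by (subst (1) sE) (simp add: algebra_simps)
    have b1: "norm ((1/\<rho>) *\<^sub>R E k $ i) \<le> 2 * (K / \<rho>)"
      using Erow[of k i] rho_pos by (simp add: divide_right_mono)
    have b2: "norm ((1/\<rho>) *\<^sub>R (C ** ts k) $ i) \<le> K / \<rho>"
      using row_bound[of "ts k" 1 C i] rho_pos by (simp add: unit K_def divide_right_mono)
    have "norm ((C ** s k) $ i) \<le> K * (1 + 2 * (K / \<rho>))"
      using row_bound[of "s k" "1 + 2 * (K / \<rho>)" C i] srow by (simp add: K_def)
    then have b3: "norm ((1/\<rho>) *\<^sub>R (C ** s k) $ i) \<le> (K / \<rho>) * (1 + 2 * (K / \<rho>))"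
      using rho_pos by (simp add: divide_right_mono)
    have qq: "(K / \<rho>) * (K / \<rho>) \<le> 1/100"
      using mult_mono[OF q1 q1] q0 by simp
    have "1/2 \<le> 1 - 2 * (K / \<rho>) - K / \<rho> - (K / \<rho>) * (1 + 2 * (K / \<rho>))"
    proof -
      have "(K / \<rho>) * (1 + 2 * (K / \<rho>)) = K / \<rho> + 2 * ((K / \<rho>) * (K / \<rho>))"
        by (simp add: algebra_simps)
      then show ?thesis using q1 qq by linarith
    qed
    also have "\<dots> \<le> norm (gam \<rho> C (s k) (y k) $ i)"
      unfolding g using norm4[of "ts k $ i" "(1/\<rho>) *\<^sub>R E k $ i" "(1/\<rho>) *\<^sub>R (C ** ts k) $ i"
          "(1/\<rho>) *\<^sub>R (C ** s k) $ i"] b1 b2 b3 by (simp add: unit)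
    finally show ?thesis .
  qed
  have sa: "\<And>u v. inner (C ** u) v = inner u (C ** v)" for u v :: "real^'r^'n"
    using selfadj[OF symC] by blast
  define F where "F k = inner (ts k) (C ** s k) + inner (y k) (ts k - s k) + \<rho>/2 * (norm (ts k - s k))\<^sup>2" for k
  have LF: "Lrho \<rho> C (ts k) (s k) (y k) = ereal (F k)" for k
  proof -
    have "indicator_ereal sphere1 (ts k $ i) = 0" for i
      using unit[of k i] by (simp add: indicator_ereal_def sphere1_def)
    then show ?thesis unfolding Lrho_def F_def frob_mult by (simp add: frob_inner)
  qed
  have Fform: "F k = inner (C ** ts k) (ts k) + \<rho>/2 * (norm (ts k - s k))\<^sup>2" for k
    unfolding F_def hy by (simp add: sa inner_diff_right)
  have Flow: "F k \<ge> - (K * real CARD('n))" for k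
  proof -
    have "\<bar>inner (C ** ts k) (ts k)\<bar> \<le> norm (C ** ts k) * norm (ts k)" by (rule Cauchy_Schwarz_ineq2)
    also have "\<dots> \<le> K * norm (ts k) * norm (ts k)"
      using schur[OF symC, of "ts k"] by (simp add: K_def mult_right_mono)
    also have "\<dots> = K * real CARD('n)" using nX2[of k] by (simp add: power2_eq_square mult.assoc)
    finally have "inner (C ** ts k) (ts k) \<ge> - (K * real CARD('n))" by linarith
    moreover have "0 \<le> \<rho>/2 * (norm (ts k - s k))\<^sup>2" using rho_pos by simp
    ultimately show ?thesis unfolding Fform by linarith
  qed
  have desc: "F (Suc k) \<le> F k - \<rho>/5 * (norm (ts (Suc k) - ts k))\<^sup>2" for k
  proof -
    let ?g = "gam \<rho> C (s k) (y k)"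
    let ?D = "ts (Suc k) - ts k"
    have "sqrt ((norm (ts (Suc k)))\<^sup>2) = sqrt ((norm (ts k))\<^sup>2)" using nX2 by simp
    then have nx: "norm (ts (Suc k)) = norm (ts k)" by simp
    have id: "F (Suc k) - F k = - \<rho> * inner ?D ?g - \<rho>/2 * (norm (s (Suc k) - s k))\<^sup>2
         + (norm (C ** ?D))\<^sup>2 / \<rho>"
      unfolding F_def gam_def
      by (rule step_id[OF linear_mm sa rho_pos nx hy sS hy])
    have ig: "inner ?D ?g \<ge> (norm ?D)\<^sup>2 / 4"
    proof -
      have "(norm ?D)\<^sup>2 / 4 = (\<Sum>i\<in>UNIV. (norm (?D $ i))\<^sup>2 / 4)"
        by (simp add: norm_sq_rows sum_divide_distrib)
      also have "\<dots> \<le> (\<Sum>i\<in>UNIV. inner (?D $ i) (?g $ i))"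
      proof (rule sum_mono)
        fix i
        show "(norm (?D $ i))\<^sup>2 / 4 \<le> inner (?D $ i) (?g $ i)"
          unfolding vector_minus_component
          by (rule row_lemma[OF unit gam_row tsS])
      qed
      also have "\<dots> = inner ?D ?g" by (simp add: inner_vec_def)
      finally show ?thesis .
    qed
    have cd: "(norm (C ** ?D))\<^sup>2 / \<rho> \<le> \<rho> / 100 * (norm ?D)\<^sup>2"
    proof -
      have "norm (C ** ?D) \<le> K * norm ?D" using schur[OF symC] by (simp add: K_def)
      also have "\<dots> \<le> (\<rho>/10) * norm ?D" using Kr by (intro mult_right_mono) auto
      finally have "(norm (C ** ?D))\<^sup>2 \<le> ((\<rho>/10) * norm ?D)\<^sup>2" by (simp add: power_mono)
      then have "(norm (C ** ?D))\<^sup>2 / \<rho> \<le> ((\<rho>/10) * norm ?D)\<^sup>2 / \<rho>"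
        using rho_pos by (simp add: divide_right_mono)
      also have "\<dots> = \<rho> / 100 * (norm ?D)\<^sup>2" using rne by (simp add: power2_eq_square)
      finally show ?thesis .
    qed
    have "\<rho> * ((norm ?D)\<^sup>2 / 4) \<le> \<rho> * inner ?D ?g" using ig rho_pos by (simp add: mult_left_mono)
    moreover have "0 \<le> \<rho>/2 * (norm (s (Suc k) - s k))\<^sup>2" using rho_pos by simp
    moreover have "0 \<le> \<rho> * (norm ?D)\<^sup>2" using rho_pos by simp
    ultimately show ?thesis using id cd by (simp add: algebra_simps)
  qed
  have decF: "decseq F"
  proof (rule decseq_SucI)
    fix k
    have "0 \<le> \<rho>/5 * (norm (ts (Suc k) - ts k))\<^sup>2" using rho_pos by simp
    then show "F (Suc k) \<le> F k" using desc[of k] by linarith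
  qed
  obtain L where FL: "F \<longlonglongrightarrow> L"
    using decseq_convergent[OF decF, of "- (K * real CARD('n))"] Flow by blast
  have G1: "(\<lambda>k. Lrho \<rho> C (ts (Suc k)) (s (Suc k)) (y (Suc k))) \<longlonglongrightarrow> ereal L"
    unfolding LF by (rule tendsto_ereal[OF LIMSEQ_Suc[OF FL]])
  have blC: "bounded_linear (\<lambda>Z::real^'r^'n. C ** Z)"
    using linear_mm linear_conv_bounded_linear by blast
  have D0: "(\<lambda>k. ts (Suc k) - ts k) \<longlonglongrightarrow> 0"
  proof -
    have a: "(\<lambda>k. 5/\<rho> * (F k - F (Suc k))) \<longlonglongrightarrow> 5/\<rho> * (L - L)"
      by (intro tendsto_intros FL LIMSEQ_Suc[OF FL])
    have b: "(norm (ts (Suc k) - ts k))\<^sup>2 \<le> 5/\<rho> * (F k - F (Suc k))" for k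
    proof -
      have "\<rho>/5 * (norm (ts (Suc k) - ts k))\<^sup>2 \<le> F k - F (Suc k)" using desc[of k] by linarith
      then show ?thesis using rho_pos by (simp add: field_simps)
    qed
    have "(\<lambda>k. (norm (ts (Suc k) - ts k))\<^sup>2) \<longlonglongrightarrow> 0"
      by (rule tendsto_sandwich[of "\<lambda>k. 0" _ _ "\<lambda>k. 5/\<rho> * (F k - F (Suc k))"])
         (use a b in auto)
    then have "(\<lambda>k. sqrt ((norm (ts (Suc k) - ts k))\<^sup>2)) \<longlonglongrightarrow> sqrt 0"
      by (rule tendsto_real_sqrt)
    then have "(\<lambda>k. norm (ts (Suc k) - ts k)) \<longlonglongrightarrow> 0" by simp
    then show ?thesis by (simp add: tendsto_norm_zero_iff)
  qed
  have SX: "(\<lambda>k. s k - ts k) \<longlonglongrightarrow> 0"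
  proof -
    have e: "s (Suc k) - ts (Suc k) = - ((1/\<rho>) *\<^sub>R (C ** (ts (Suc k) - ts k)))" for k
      by (simp add: hs mm_diff scaleR_diff_right)
    have "(\<lambda>k. C ** (ts (Suc k) - ts k)) \<longlonglongrightarrow> C ** 0"
      by (rule bounded_linear.tendsto[OF blC D0])
    then have "(\<lambda>k. - ((1/\<rho>) *\<^sub>R (C ** (ts (Suc k) - ts k)))) \<longlonglongrightarrow> - ((1/\<rho>) *\<^sub>R (C ** 0))"
      by (intro tendsto_intros)
    then have "(\<lambda>k. s (Suc k) - ts (Suc k)) \<longlonglongrightarrow> 0" unfolding e by (simp add: mm_zero)
    then show ?thesis by (rule LIMSEQ_imp_Suc)
  qed
  have G2: "(\<lambda>k. Lrho \<rho> C (ts k) (s k) (y k) - ereal (frob (C ** ts k) (ts k))) \<longlonglongrightarrow> 0"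
  proof -
    have e: "Lrho \<rho> C (ts k) (s k) (y k) - ereal (frob (C ** ts k) (ts k)) = ereal (\<rho>/2 * (norm (s k - ts k))\<^sup>2)" for k
      unfolding LF Fform frob_inner by (simp add: norm_minus_commute)
    have "(\<lambda>k. norm (s k - ts k)) \<longlonglongrightarrow> 0" using SX by (simp add: tendsto_norm_zero_iff)
    then have "(\<lambda>k. \<rho>/2 * (norm (s k - ts k))\<^sup>2) \<longlonglongrightarrow> \<rho>/2 * 0\<^sup>2" by (intro tendsto_intros)
    then have "(\<lambda>k. ereal (\<rho>/2 * (norm (s k - ts k))\<^sup>2)) \<longlonglongrightarrow> ereal 0"
      by (intro tendsto_ereal) simp
    then show ?thesis unfolding e by (simp add: zero_ereal_def)
  qed
  have G3: "\<exists>\<phi> l. strict_mono \<phi> \<and> (ts \<circ> \<phi>) \<longlonglongrightarrow> l"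
  proof -
    have "norm (ts k) = sqrt (real CARD('n))" for k
      using nX2[of k] by (metis norm_ge_zero real_sqrt_unique)
    then have "bounded (range ts)" unfolding bounded_iff by auto
    then show ?thesis using bounded_imp_convergent_subsequence by blast
  qed
  have G4: "l \<in> Omega C" if phi: "strict_mono \<phi>" and lim: "(ts \<circ> \<phi>) \<longlonglongrightarrow> l" for \<phi> l
  proof -
    have lim': "(\<lambda>k. ts (\<phi> k)) \<longlonglongrightarrow> l" using lim by (simp add: o_def)
    have lunit: "norm (l $ i) = 1" for i
    proof -
      have "(\<lambda>k. norm (ts (\<phi> k) $ i)) \<longlonglongrightarrow> norm (l $ i)"
        by (intro tendsto_intros lim')
      then have "(\<lambda>k. 1::real) \<longlonglongrightarrow> norm (l $ i)" by (simp add: unit)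
      then show ?thesis using LIMSEQ_unique tendsto_const by metis
    qed
    have Dphi: "(\<lambda>k. ts (Suc (\<phi> k)) - ts (\<phi> k)) \<longlonglongrightarrow> 0"
      using LIMSEQ_subseq_LIMSEQ[OF D0 phi] by (simp add: o_def)
    have X1: "(\<lambda>k. ts (Suc (\<phi> k))) \<longlonglongrightarrow> l"
    proof -
      have "(\<lambda>k. ts (\<phi> k) + (ts (Suc (\<phi> k)) - ts (\<phi> k))) \<longlonglongrightarrow> l + 0"
        by (intro tendsto_intros lim' Dphi)
      then show ?thesis by simp
    qed
    have Sphi: "(\<lambda>k. s (\<phi> k)) \<longlonglongrightarrow> l"
    proof -
      have "(\<lambda>k. s (\<phi> k) - ts (\<phi> k)) \<longlonglongrightarrow> 0"
        using LIMSEQ_subseq_LIMSEQ[OF SX phi] by (simp add: o_def)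
      then have "(\<lambda>k. ts (\<phi> k) + (s (\<phi> k) - ts (\<phi> k))) \<longlonglongrightarrow> l + 0"
        by (intro tendsto_intros lim')
      then show ?thesis by simp
    qed
    define g where "g = l - (1/\<rho>) *\<^sub>R (C ** l + C ** l)"
    have gphi: "(\<lambda>k. gam \<rho> C (s (\<phi> k)) (y (\<phi> k))) \<longlonglongrightarrow> g"
    proof -
      have c1: "(\<lambda>k. C ** ts (\<phi> k)) \<longlonglongrightarrow> C ** l" by (rule bounded_linear.tendsto[OF blC lim'])
      have c2: "(\<lambda>k. C ** s (\<phi> k)) \<longlonglongrightarrow> C ** l" by (rule bounded_linear.tendsto[OF blC Sphi])
      show ?thesis unfolding gam_def hy g_def by (intro tendsto_intros Sphi c1 c2)
    qed
    have stat: "- ((C ** l) $ i) = (\<rho>/2 * (norm (g $ i) - 1)) *\<^sub>R (l $ i)" for i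
    proof -
      let ?gi = "\<lambda>k. gam \<rho> C (s (\<phi> k)) (y (\<phi> k)) $ i"
      have gi: "?gi \<longlonglongrightarrow> g $ i" by (rule tendsto_vec_nth[OF gphi])
      have eq: "norm (?gi k) *\<^sub>R ts (Suc (\<phi> k)) $ i = ?gi k" for k
        using assmA tsS by simp
      have "(\<lambda>k. norm (?gi k) *\<^sub>R ts (Suc (\<phi> k)) $ i) \<longlonglongrightarrow> norm (g $ i) *\<^sub>R l $ i"
        by (intro tendsto_intros gi tendsto_vec_nth[OF X1])
      then have "?gi \<longlonglongrightarrow> norm (g $ i) *\<^sub>R l $ i" unfolding eq .
      then have ge: "norm (g $ i) *\<^sub>R l $ i = g $ i" by (rule LIMSEQ_unique[OF _ gi])
      have hG: "g $ i = l $ i - (1/\<rho>) *\<^sub>R ((C ** l) $ i + (C ** l) $ i)" unfolding g_def by simp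
      show ?thesis
      proof (subst vec_eq_iff, intro allI)
        fix j
        have "norm (g $ i) * (l $ i $ j) = l $ i $ j - (1/\<rho>) * ((C ** l) $ i $ j + (C ** l) $ i $ j)"
          using arg_cong[OF trans[OF ge hG], of "\<lambda>v. v $ j"] by simp
        then show "(- ((C ** l) $ i)) $ j = ((\<rho>/2 * (norm (g $ i) - 1)) *\<^sub>R (l $ i)) $ j"
          using rne by (simp add: field_simps)
      qed
    qed
    show ?thesis unfolding Omega_def mem_Collect_eq
      using lunit stat limiting_sphere[OF lunit] by (simp add: Mset_def)
  qed
  show ?thesis using G1 G2 G3 G4 by blast
qed

end
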